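(* Assume (H3)–(H7). If $d_\phi=d$, the functions $\widetilde\Psi_1,\widetilde\Psi_2$ are linearly independent (rank 2). If $1\le d_\phi\le d-1$, the functions $\widehat\Psi_1,\widehat\Psi_2$ are linearly independent (rank 2).
   Context: $\phi\in C^2(\mathbb R^d)$, $\rho=e^{-\phi}$, with (H3) $\int\rho=1$, $\int x\rho=0$; (H4) $\forall\varepsilon\,\exists C_\varepsilon$: $|\nabla^2\phi|\le\varepsilon|\nabla\phi|^2+C_\varepsilon$; (H5) Poincaré inequality for $\rho$; (H6) $\int(|x|^4+|\phi|^2+|\nabla\phi|^4)\rho<\infty$; (H7) $\int\nabla^2\phi\,\rho=\mathrm{Id}$. $\langle\varphi\rangle=\int\varphi\rho\,dx$; $\xi_2=|x|^2-\langle|x|^2\rangle$, $\xi_\phi=\phi-\langle\phi\rangle$. $\Phi(x)=\nabla\phi(x)-x$; $\Psi_1(x)=\frac{2\xi_\phi(x)+\nabla\phi(x)\cdot x-d}{\sqrt{2d}}-x\cdot\frac{\langle\nabla^2\phi\,x\rangle}{\sqrt{2d}}$; $\Psi_2(x)=\frac{\xi_2(x)}{2\sqrt{2d}}$. $E_\phi=\mathrm{Span}\{\nabla\phi(x)-x:x\in\mathbb R^d\}$, $d_\phi=\dim E_\phi$; coordinates are chosen with $E_\phi=\mathrm{Span}\{e_1,\dots,e_{d_\phi}\}$, so $\Phi=(\widehat\Phi,0)$. If $d_\phi=d$: $M_\phi=\langle\Phi\otimes\Phi\rangle$ (invertible), $\alpha_i=\langle\Psi_i\Phi\rangle$, $\widetilde\Psi_i=\Psi_i-\Phi\cdot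 M_\phi^{-1}\alpha_i$. If $1\le d_\phi\le d-1$: $\widehat M_\phi=\langle\widehat\Phi\otimes\widehat\Phi\rangle$ (invertible), $\hat\alpha_i=\langle\Psi_i\widehat\Phi\rangle$, $\widehat\Psi_i=\Psi_i-\widehat\Phi\cdot\widehat M_\phi^{-1}\hat\alpha_i$. *)

theory Defs
  imports "HOL-Analysis.Analysis"
begin

definition rho :: "(real^'n::finite \<Rightarrow> real) \<Rightarrow> real^'n \<Rightarrow> real" where
  "rho \<phi> x = exp (- \<phi> x)"

definition avg :: "(real^'n::finite \<Rightarrow> real) \<Rightarrow> (real^'n \<Rightarrow> 'b::{banach,second_countable_topology}) \<Rightarrow> 'b" where
  "avg \<phi> f = integral\<^sup>L lborel (\<lambda>x. rho \<phi> x *\<^sub>R f x)"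

definition C2_with :: "(real^'n::finite \<Rightarrow> real) \<Rightarrow> (real^'n \<Rightarrow> real^'n) \<Rightarrow> (real^'n \<Rightarrow> real^'n^'n) \<Rightarrow> bool" where
  "C2_with \<phi> g H \<longleftrightarrow>
     (\<forall>x. (\<phi> has_derivative (\<lambda>h. g x \<bullet> h)) (at x)) \<and>
     (\<forall>x. (g has_derivative (\<lambda>h. H x *v h)) (at x)) \<and>
     continuous_on UNIV H"

definition H3 :: "(real^'n::finite \<Rightarrow> real) \<Rightarrow> bool" where
  "H3 \<phi> \<longleftrightarrow> has_bochner_integral lborel (rho \<phi>) 1 \<and>
                has_bochner_integral lborel (\<lambda>x. rho \<phi> x *\<^sub>R x) 0"

definition H4 :: "(real^'n::finite \<Rightarrow> real^'n) \<Rightarrow> (real^'n \<Rightarrow> real^'n^'n) \<Rightarrow> bool" where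
  "H4 g H \<longleftrightarrow> (\<forall>\<epsilon>>0. \<exists>C. \<forall>x. norm (H x) \<le> \<epsilon> * (norm (g x))\<^sup>2 + C)"

definition H5 :: "(real^'n::finite \<Rightarrow> real) \<Rightarrow> bool" where
  "H5 \<phi> \<longleftrightarrow> (\<exists>C. \<forall>(f :: real^'n \<Rightarrow> real) Df.
      (\<forall>x. (f has_derivative (\<lambda>h. Df x \<bullet> h)) (at x)) \<and> continuous_on UNIV Df \<and>
      integrable lborel (\<lambda>x. (f x)\<^sup>2 * rho \<phi> x) \<and>
      integrable lborel (\<lambda>x. (norm (Df x))\<^sup>2 * rho \<phi> x) \<longrightarrow>
      avg \<phi> (\<lambda>x. (f x - avg \<phi> f)\<^sup>2) \<le> C * avg \<phi> (\<lambda>x. (norm (Df x))\<^sup>2))"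

definition H6 :: "(real^'n::finite \<Rightarrow> real) \<Rightarrow> (real^'n \<Rightarrow> real^'n) \<Rightarrow> bool" where
  "H6 \<phi> g \<longleftrightarrow> integrable lborel
      (\<lambda>x. ((norm x)^4 + (\<phi> x)\<^sup>2 + (norm (g x))^4) * rho \<phi> x)"

definition H7 :: "(real^'n::finite \<Rightarrow> real) \<Rightarrow> (real^'n \<Rightarrow> real^'n^'n) \<Rightarrow> bool" where
  "H7 \<phi> H \<longleftrightarrow> has_bochner_integral lborel (\<lambda>x. rho \<phi> x *\<^sub>R H x) (mat 1)"

definition hyps :: "(real^'n::finite \<Rightarrow> real) \<Rightarrow> (real^'n \<Rightarrow> real^'n) \<Rightarrow> (real^'n \<Rightarrow> real^'n^'n) \<Rightarrow> bool" where
  "hyps \<phi> g H \<longleftrightarrow> C2_with \<phi> g H \<and> H3 \<phi> \<and> H4 g H \<and> H5 \<phi> \<and> H6 \<phi> g \<and> H7 \<phi> H"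

definition Phi :: "(real^'n::finite \<Rightarrow> real^'n) \<Rightarrow> real^'n \<Rightarrow> real^'n" where
  "Phi g x = g x - x"

definition E_phi :: "(real^'n::finite \<Rightarrow> real^'n) \<Rightarrow> (real^'n) set" where
  "E_phi g = span (range (Phi g))"

definition d_phi :: "(real^'n::finite \<Rightarrow> real^'n) \<Rightarrow> nat" where
  "d_phi g = dim (E_phi g)"

definition Psi1 :: "(real^'n::finite \<Rightarrow> real) \<Rightarrow> (real^'n \<Rightarrow> real^'n) \<Rightarrow> (real^'n \<Rightarrow> real^'n^'n) \<Rightarrow> real^'n \<Rightarrow> real" where
  "Psi1 \<phi> g H x =
     (2 * (\<phi> x - avg \<phi> \<phi>) + g x \<bullet> x - real CARD('n)) / sqrt (2 * real CARD('n))
     - x \<bullet> avg \<phi> (\<lambda>y. H y *v y) / sqrt (2 * real CARD('n))"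

definition Psi2 :: "(real^'n::finite \<Rightarrow> real) \<Rightarrow> real^'n \<Rightarrow> real" where
  "Psi2 \<phi> x = ((norm x)\<^sup>2 - avg \<phi> (\<lambda>y. (norm y)\<^sup>2)) / (2 * sqrt (2 * real CARD('n)))"

definition M_phi :: "(real^'n::finite \<Rightarrow> real) \<Rightarrow> (real^'n \<Rightarrow> real^'n) \<Rightarrow> real^'n^'n" where
  "M_phi \<phi> g = (\<chi> i j. avg \<phi> (\<lambda>x. Phi g x $ i * Phi g x $ j))"

definition alpha :: "(real^'n::finite \<Rightarrow> real) \<Rightarrow> (real^'n \<Rightarrow> real^'n) \<Rightarrow> (real^'n \<Rightarrow> real) \<Rightarrow> real^'n" where
  "alpha \<phi> g \<Psi> = (\<chi> i. avg \<phi> (\<lambda>x. \<Psi> x * Phi g x $ i))"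

definition Psi_tilde :: "(real^'n::finite \<Rightarrow> real) \<Rightarrow> (real^'n \<Rightarrow> real^'n) \<Rightarrow> (real^'n \<Rightarrow> real) \<Rightarrow> real^'n \<Rightarrow> real" where
  "Psi_tilde \<phi> g \<Psi> x = \<Psi> x - Phi g x \<bullet> (matrix_inv (M_phi \<phi> g) *v alpha \<phi> g \<Psi>)"

text \<open>Partial case: R^d = real^('k + 'm), where the first d_phi = CARD('k) coordinates
  are those indexed by Inl.\<close>
definition Phi_hat :: "(real^('k::finite + 'm::finite) \<Rightarrow> real^('k + 'm)) \<Rightarrow> real^('k + 'm) \<Rightarrow> real^'k" where
  "Phi_hat g x = (\<chi> i. Phi g x $ Inl i)"

definition M_hat :: "(real^('k::finite + 'm::finite) \<Rightarrow> real) \<Rightarrow> (real^('k + 'm) \<Rightarrow> real^('k + 'm)) \<Rightarrow> real^'k^'k" where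
  "M_hat \<phi> g = (\<chi> i j. avg \<phi> (\<lambda>x. Phi_hat g x $ i * Phi_hat g x $ j))"

definition alpha_hat :: "(real^('k::finite + 'm::finite) \<Rightarrow> real) \<Rightarrow> (real^('k + 'm) \<Rightarrow> real^('k + 'm)) \<Rightarrow> (real^('k + 'm) \<Rightarrow> real) \<Rightarrow> real^'k" where
  "alpha_hat \<phi> g \<Psi> = (\<chi> i. avg \<phi> (\<lambda>x. \<Psi> x * Phi_hat g x $ i))"

definition Psi_hat :: "(real^('k::finite + 'm::finite) \<Rightarrow> real) \<Rightarrow> (real^('k + 'm) \<Rightarrow> real^('k + 'm)) \<Rightarrow> (real^('k + 'm) \<Rightarrow> real) \<Rightarrow> real^('k + 'm) \<Rightarrow> real" where
  "Psi_hat \<phi> g \<Psi> x = \<Psi> x - (Phi_hat g x :: real^'k) \<bullet> (matrix_inv (M_hat \<phi> g) *v alpha_hat \<phi> g \<Psi>)"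

definition lin_indep2 :: "('a \<Rightarrow> real) \<Rightarrow> ('a \<Rightarrow> real) \<Rightarrow> bool" where
  "lin_indep2 f1 f2 \<longleftrightarrow> (\<forall>a b. (\<forall>x. a * f1 x + b * f2 x = 0) \<longrightarrow> a = 0 \<and> b = 0)"

end

theory Submission
  imports Defs
begin

lemma ray_lemma:
  fixes \<phi> :: "real^'n::finite \<Rightarrow> real" and g :: "real^'n \<Rightarrow> real^'n"
  assumes D: "\<And>x. (\<phi> has_derivative (\<lambda>h. g x \<bullet> h)) (at x)"
    and E: "\<And>x. 2 * \<phi> x + g x \<bullet> (x - p) = \<alpha> * ((x - p) \<bullet> (x - p)) + (x - p) \<bullet> \<beta> + \<gamma>"
  shows "\<phi> x = \<alpha> / 4 * ((x - p) \<bullet> (x - p)) + (x - p) \<bullet> \<beta> / 3 + \<gamma> / 2"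
proof -
  define y where "y = x - p"
  define F where "F t = t\<^sup>2 * \<phi> (p + t *\<^sub>R y) - (\<alpha> / 4 * t^4 * (y \<bullet> y) + t^3 * (y \<bullet> \<beta>) / 3 + t\<^sup>2 * \<gamma> / 2)" for t :: real
  have dphi: "((\<lambda>t. \<phi> (p + t *\<^sub>R y)) has_real_derivative (g (p + t *\<^sub>R y) \<bullet> y)) (at t)" for t
  proof -
    have "((\<lambda>t. p + t *\<^sub>R y) has_derivative (\<lambda>h. h *\<^sub>R y)) (at t)"
      by (auto intro!: derivative_eq_intros)
    from has_derivative_compose[OF this D]
    have "((\<lambda>t. \<phi> (p + t *\<^sub>R y)) has_derivative (\<lambda>h. g (p + t *\<^sub>R y) \<bullet> (h *\<^sub>R y))) (at t)" .
    then show ?thesis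
      unfolding has_field_derivative_def by (simp add: mult.commute[of _ "g (p + t *\<^sub>R y) \<bullet> y"])
  qed
  have "(F has_real_derivative 0) (at t)" for t
  proof -
    have "(F has_real_derivative (2 * t * \<phi> (p + t *\<^sub>R y) + t\<^sup>2 * (g (p + t *\<^sub>R y) \<bullet> y)
        - (\<alpha> * t^3 * (y \<bullet> y) + t\<^sup>2 * (y \<bullet> \<beta>) + t * \<gamma>))) (at t)"
      unfolding F_def
      by (auto intro!: derivative_eq_intros dphi simp: power2_eq_square power3_eq_cube
            field_simps eval_nat_numeral)
    moreover have "2 * t * \<phi> (p + t *\<^sub>R y) + t\<^sup>2 * (g (p + t *\<^sub>R y) \<bullet> y)
        - (\<alpha> * t^3 * (y \<bullet> y) + t\<^sup>2 * (y \<bullet> \<beta>) + t * \<gamma>) = 0"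
    proof -
      have e: "2 * \<phi> (p + t *\<^sub>R y) + g (p + t *\<^sub>R y) \<bullet> (t *\<^sub>R y) = \<alpha> * ((t *\<^sub>R y) \<bullet> (t *\<^sub>R y)) + (t *\<^sub>R y) \<bullet> \<beta> + \<gamma>"
        using E[of "p + t *\<^sub>R y"] by simp
      have "2 * t * \<phi> (p + t *\<^sub>R y) + t\<^sup>2 * (g (p + t *\<^sub>R y) \<bullet> y)
        - (\<alpha> * t^3 * (y \<bullet> y) + t\<^sup>2 * (y \<bullet> \<beta>) + t * \<gamma>)
        = t * (2 * \<phi> (p + t *\<^sub>R y) + g (p + t *\<^sub>R y) \<bullet> (t *\<^sub>R y) - (\<alpha> * ((t *\<^sub>R y) \<bullet> (t *\<^sub>R y)) + (t *\<^sub>R y) \<bullet> \<beta> + \<gamma>))"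
        by (simp add: algebra_simps power2_eq_square power3_eq_cube)
      then show ?thesis using e by simp
    qed
    ultimately show ?thesis by simp
  qed
  then have "F 1 = F 0" using DERIV_isconst_all by blast
  then show ?thesis by (simp add: F_def y_def algebra_simps)
qed

lemma ennreal_suminf_const_inf: "(\<Sum>i::nat. c) = \<infinity>" if "(c::ennreal) > 0"
proof -
  have "(\<Sum>i::nat. c) = (SUP n. of_nat n * c)" using suminf_eq_SUP[of "\<lambda>_. c"] by simp
  also have "\<dots> = (SUP n. of_nat n) * c" by (simp add: SUP_mult_right_ennreal)
  also have "\<dots> = top * c" by (simp add: ennreal_SUP_of_nat_eq_top)
  also have "\<dots> = \<infinity>" using that by (simp add: ennreal_top_mult)
  finally show ?thesis .
qed

lemma line_formula:
  fixes \<phi> :: "real^'n::finite \<Rightarrow> real" and g :: "real^'n \<Rightarrow> real^'n"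
  assumes D: "\<And>x. (\<phi> has_derivative (\<lambda>h. g x \<bullet> h)) (at x)"
    and E: "\<And>x. g x \<bullet> v = x \<bullet> v + (x \<bullet> x - c) / k" and k: "k \<noteq> 0"
  shows "\<phi> (e + t *\<^sub>R v) = \<phi> e + t * (e \<bullet> v) + t\<^sup>2 * (v \<bullet> v) / 2
            + (t * (e \<bullet> e) + t\<^sup>2 * (e \<bullet> v) + t^3 * (v \<bullet> v) / 3 - c * t) / k"
proof -
  define F where "F t = \<phi> (e + t *\<^sub>R v) - (t * (e \<bullet> v) + t\<^sup>2 * (v \<bullet> v) / 2
            + (t * (e \<bullet> e) + t\<^sup>2 * (e \<bullet> v) + t^3 * (v \<bullet> v) / 3 - c * t) / k)" for t :: real
  have dphi: "((\<lambda>t. \<phi> (e + t *\<^sub>R v)) has_real_derivative (g (e + t *\<^sub>R v) \<bullet> v)) (at t)" for t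
  proof -
    have "((\<lambda>t. e + t *\<^sub>R v) has_derivative (\<lambda>h. h *\<^sub>R v)) (at t)"
      by (auto intro!: derivative_eq_intros)
    from has_derivative_compose[OF this D]
    have "((\<lambda>t. \<phi> (e + t *\<^sub>R v)) has_derivative (\<lambda>h. g (e + t *\<^sub>R v) \<bullet> (h *\<^sub>R v))) (at t)" .
    then show ?thesis
      unfolding has_field_derivative_def by (simp add: mult.commute[of _ "g (e + t *\<^sub>R v) \<bullet> v"])
  qed
  have "(F has_real_derivative 0) (at t)" for t
  proof -
    have "(F has_real_derivative (g (e + t *\<^sub>R v) \<bullet> v - (e \<bullet> v + t * (v \<bullet> v)
        + ((e \<bullet> e) + 2 * t * (e \<bullet> v) + t\<^sup>2 * (v \<bullet> v) - c) / k))) (at t)"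
      unfolding F_def
      using k by (auto intro!: derivative_eq_intros dphi simp: power2_eq_square power3_eq_cube
            field_simps eval_nat_numeral)
    moreover have "g (e + t *\<^sub>R v) \<bullet> v - (e \<bullet> v + t * (v \<bullet> v)
        + ((e \<bullet> e) + 2 * t * (e \<bullet> v) + t\<^sup>2 * (v \<bullet> v) - c) / k) = 0"
      unfolding E by (simp add: algebra_simps inner_commute power2_eq_square)
    ultimately show ?thesis by simp
  qed
  then have "F 1 = F 0" using DERIV_isconst_all by blast
  hence "F t = F 0" using DERIV_isconst_all \<open>\<And>t. (F has_real_derivative 0) (at t)\<close> by blast
  then show ?thesis by (simp add: F_def algebra_simps)
qed

lemma absge1: fixes m n :: nat assumes "m \<noteq> n" shows "\<bar>real n - real m\<bar> \<ge> 1"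
proof (cases "m < n")
  case True
  hence "real (Suc m) \<le> real n" by (simp only: of_nat_le_iff Suc_le_eq)
  then show ?thesis by simp
next
  case False
  hence "n < m" using assms by simp
  hence "real (Suc n) \<le> real m" by (simp only: of_nat_le_iff Suc_le_eq)
  then show ?thesis by simp
qed

lemma growth_contra:
  fixes \<phi> :: "real^'n::finite \<Rightarrow> real" and g :: "real^'n \<Rightarrow> real^'n"
  assumes D: "\<And>x. (\<phi> has_derivative (\<lambda>h. g x \<bullet> h)) (at x)"
    and E: "\<And>x. g x \<bullet> v = x \<bullet> v + (x \<bullet> x - c) / k" and k: "k > 0" and v: "v \<noteq> 0"
    and I: "integrable lborel (\<lambda>x. exp (- \<phi> x))"
  shows False
proof -
  have cont: "continuous_on UNIV \<phi>"
    using D has_derivative_continuous continuous_at_imp_continuous_on by blast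
  obtain e0 where "e0 \<in> cball (0::real^'n) 1" and e0: "\<And>y. y \<in> cball 0 1 \<Longrightarrow> \<phi> y \<le> \<phi> e0"
    using continuous_attains_sup[of "cball (0::real^'n) 1" \<phi>] continuous_on_subset[OF cont]
    by auto
  define M where "M = \<phi> e0"
  define V where "V = v \<bullet> v"
  define nv where "nv = norm v"
  have V: "V > 0" using v by (simp add: V_def)
  have nv: "nv > 0" using v by (simp add: nv_def)
  define K where "K = \<bar>M\<bar> + nv + V/2 + nv/k + \<bar>c\<bar>/k"
  define T where "T = max 1 (3*k*K/V)"
  have neg: "\<phi> (e + (-\<tau>) *\<^sub>R v) \<le> 0" if e: "norm e \<le> 1" and \<tau>: "\<tau> \<ge> T" for e \<tau>
  proof -
    have t1: "\<tau> \<ge> 1" using \<tau> by (simp add: T_def)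
    have "3*k*K/V \<le> \<tau>" using \<tau> by (simp add: T_def)
    hence tV: "3*k*K \<le> \<tau> * V" using V by (simp add: divide_le_eq)
    have f: "\<phi> (e + (-\<tau>) *\<^sub>R v) = \<phi> e + (-\<tau>)*(e \<bullet> v) + \<tau>\<^sup>2*V/2 + ((-\<tau>)*(e \<bullet> e))/k
        + (\<tau>\<^sup>2*(e \<bullet> v))/k + ((-\<tau>)^3*V/3)/k + (c*\<tau>)/k"
      using line_formula[OF D E, where e=e and t="-\<tau>"] k
      by (simp add: V_def diff_divide_distrib add_divide_distrib)
    have ev: "\<bar>e \<bullet> v\<bar> \<le> nv"
    proof -
      have "norm e * norm v \<le> 1 * norm v" using e by (intro mult_right_mono) auto
      then show ?thesis using Cauchy_Schwarz_ineq2[of e v] by (simp add: nv_def)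
    qed
    have tt: "\<tau> \<le> \<tau>\<^sup>2" using t1 by (simp add: power2_eq_square)
    have b1: "\<phi> e \<le> \<bar>M\<bar> * \<tau>\<^sup>2"
    proof -
      have "\<phi> e \<le> M" using e0[of e] e by (simp add: M_def)
      also have "\<dots> \<le> \<bar>M\<bar> * 1" by simp
      also have "\<dots> \<le> \<bar>M\<bar> * \<tau>\<^sup>2" using t1 tt by (intro mult_left_mono) auto
      finally show ?thesis .
    qed
    have b2: "(-\<tau>)*(e \<bullet> v) \<le> nv * \<tau>\<^sup>2"
    proof -
      have "-(e \<bullet> v) \<le> nv" using ev by linarith
      hence "\<tau> * (-(e \<bullet> v)) \<le> \<tau> * nv" using t1 by (intro mult_left_mono) auto
      hence "(-\<tau>)*(e \<bullet> v) \<le> \<tau> * nv" by simp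
      also have "\<dots> \<le> nv * \<tau>\<^sup>2" using tt nv by (simp add: mult.commute)
      finally show ?thesis .
    qed
    have b3: "((-\<tau>)*(e \<bullet> e))/k \<le> 0" using t1 k by (simp add: divide_nonpos_pos)
    have b4: "(\<tau>\<^sup>2*(e \<bullet> v))/k \<le> (nv/k) * \<tau>\<^sup>2"
    proof -
      have "\<tau>\<^sup>2*(e \<bullet> v) \<le> \<tau>\<^sup>2 * nv" using ev by (intro mult_left_mono) auto
      then show ?thesis using k by (simp add: divide_right_mono mult.commute)
    qed
    have b5: "(c*\<tau>)/k \<le> (\<bar>c\<bar>/k) * \<tau>\<^sup>2"
    proof -
      have "c*\<tau> \<le> \<bar>c\<bar> * \<tau>" using t1 by (intro mult_right_mono) auto
      also have "\<dots> \<le> \<bar>c\<bar> * \<tau>\<^sup>2" using tt by (intro mult_left_mono) auto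
      finally have "c*\<tau> \<le> \<bar>c\<bar> * \<tau>\<^sup>2" .
      then show ?thesis using k by (simp add: divide_right_mono mult.commute)
    qed
    have b6: "((-\<tau>)^3*V/3)/k = - (\<tau>\<^sup>2 * (\<tau> * V) / (3*k))"
      by (simp add: power2_eq_square power3_eq_cube)
    have b7: "\<tau>\<^sup>2 * K \<le> \<tau>\<^sup>2 * (\<tau> * V) / (3*k)"
    proof -
      have "\<tau>\<^sup>2 * (3*k*K) \<le> \<tau>\<^sup>2 * (\<tau> * V)" using tV by (intro mult_left_mono) auto
      then show ?thesis using k by (simp add: le_divide_eq mult.commute mult.left_commute)
    qed
    have "\<phi> (e + (-\<tau>) *\<^sub>R v) \<le> \<tau>\<^sup>2 * K - \<tau>\<^sup>2 * (\<tau> * V) / (3*k)"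
      unfolding f b6 K_def using b1 b2 b3 b4 b5
      by (simp add: algebra_simps)
    then show ?thesis using b7 by linarith
  qed
  define \<tau>n where "\<tau>n n = T + 3 * real n / nv" for n :: nat
  define B where "B n = ball ((-\<tau>n n) *\<^sub>R v) 1" for n
  have sub: "1 \<le> exp (- \<phi> x)" if "x \<in> B n" for x n
  proof -
    define e where "e = x + \<tau>n n *\<^sub>R v"
    have "norm e < 1" using that by (simp add: B_def e_def dist_norm norm_minus_commute)
    moreover have "\<tau>n n \<ge> T" using nv by (simp add: \<tau>n_def)
    ultimately have "\<phi> (e + (-\<tau>n n) *\<^sub>R v) \<le> 0" using neg by simp
    moreover have "e + (-\<tau>n n) *\<^sub>R v = x" by (simp add: e_def)
    ultimately show ?thesis by simp
  qed
  have disj: "disjoint_family B"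
    unfolding disjoint_family_on_def
  proof (intro ballI impI)
    fix m n :: nat assume "m \<noteq> n"
    show "B m \<inter> B n = {}"
    proof (rule ccontr)
      assume "B m \<inter> B n \<noteq> {}"
      then obtain x where "x \<in> B m" "x \<in> B n" by blast
      hence a1: "dist ((-\<tau>n m) *\<^sub>R v) x < 1" and a2: "dist ((-\<tau>n n) *\<^sub>R v) x < 1"
        unfolding B_def mem_ball by auto
      have a3: "dist x ((-\<tau>n n) *\<^sub>R v) < 1" using a2 by (simp add: dist_commute)
      have "dist ((-\<tau>n m) *\<^sub>R v) ((-\<tau>n n) *\<^sub>R v) < 2"
        using dist_triangle[of "(-\<tau>n m) *\<^sub>R v" "(-\<tau>n n) *\<^sub>R v" x] a1 a3 by linarith
      moreover have "dist ((-\<tau>n m) *\<^sub>R v) ((-\<tau>n n) *\<^sub>R v) = \<bar>\<tau>n n - \<tau>n m\<bar> * nv"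
        by (simp add: dist_norm nv_def flip: scaleR_diff_left)
      moreover have "\<bar>\<tau>n n - \<tau>n m\<bar> * nv = 3 * \<bar>real n - real m\<bar>"
      proof -
        have "\<tau>n n - \<tau>n m = 3 * (real n - real m) / nv" by (simp add: \<tau>n_def diff_divide_distrib right_diff_distrib)
        then have h2: "(\<tau>n n - \<tau>n m) * nv = 3 * (real n - real m)" using nv by simp
        have "\<bar>\<tau>n n - \<tau>n m\<bar> * nv = \<bar>(\<tau>n n - \<tau>n m) * nv\<bar>" using nv by (simp add: abs_mult)
        also have "\<dots> = \<bar>3 * (real n - real m)\<bar>" by (simp only: h2)
        also have "\<dots> = 3 * \<bar>real n - real m\<bar>" by (simp only: abs_mult)
        finally show ?thesis .
      qed
      moreover have "\<bar>real n - real m\<bar> \<ge> 1" using \<open>m \<noteq> n\<close> by (rule absge1)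
      ultimately show False by (smt (verit))
    qed
  qed
  have cpos: "measure lborel (ball (0::real^'n) 1) > 0" by (rule content_ball_pos) simp
  have mB: "emeasure lborel (B n) = ennreal (measure lborel (ball (0::real^'n) 1))" for n
  proof -
    have "emeasure lborel (B n) = ennreal (measure lborel (B n))"
      using emeasure_lborel_ball_finite[of "(-\<tau>n n) *\<^sub>R v" 1]
      by (simp add: B_def emeasure_eq_ennreal_measure)
    also have "measure lborel (B n) = measure lborel (ball (0::real^'n) 1)"
      using content_ball_conv_unit_ball[of 1 "(-\<tau>n n) *\<^sub>R v"] by (simp add: B_def)
    finally show ?thesis .
  qed
  have "emeasure lborel (\<Union>n. B n) = (\<Sum>n. emeasure lborel (B n))"
  proof -
    have "range B \<subseteq> sets lborel" by (auto simp: B_def)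
    from suminf_emeasure[OF this disj] show ?thesis by simp
  qed
  also have "\<dots> = \<infinity>" unfolding mB using cpos by (intro ennreal_suminf_const_inf) simp
  finally have inf: "emeasure lborel (\<Union>n. B n) = \<infinity>" .
  have "emeasure lborel (\<Union>n. B n) = (\<integral>\<^sup>+x. indicator (\<Union>n. B n) x \<partial>lborel)"
    by (simp add: B_def)
  also have "\<dots> \<le> (\<integral>\<^sup>+x. ennreal (norm (exp (- \<phi> x))) \<partial>lborel)"
  proof (rule nn_integral_mono)
    fix x
    show "indicator (\<Union>n. B n) x \<le> ennreal (norm (exp (- \<phi> x)))"
    proof (cases "x \<in> (\<Union>n. B n)")
      case True
      then obtain n where "x \<in> B n" by blast
      then show ?thesis using sub[of x n] True by (simp add: indicator_def)
    qed (simp add: indicator_def)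
  qed
  also have "\<dots> < \<infinity>" using I by (simp add: integrable_iff_bounded)
  finally show False using inf by simp
qed

lemma gauss_center:
  fixes \<phi> :: "real^'n::finite \<Rightarrow> real" and c :: "real^'n"
  assumes phi: "\<And>x. \<phi> x = (x + c) \<bullet> (x + c) / 2 + \<kappa>" and H3: "H3 \<phi>"
  shows "c = 0"
proof -
  have I1: "has_bochner_integral lborel (rho \<phi>) 1"
    and I0: "has_bochner_integral lborel (\<lambda>x. rho \<phi> x *\<^sub>R x) 0"
    using H3 by (auto simp: H3_def)
  define T where "T x = (-2 *\<^sub>R c) + (-1::real) *\<^sub>R x" for x :: "real^'n"
  have L: "lborel = distr lborel borel T"
    using lborel_affine[of "-1::real" "-2 *\<^sub>R c"] by (simp add: T_def[abs_def] density_1)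
  have rho_eq: "rho \<phi> = (\<lambda>x. exp (- ((x + c) \<bullet> (x + c) / 2 + \<kappa>)))"
    by (simp add: rho_def phi fun_eq_iff)
  have [measurable]: "rho \<phi> \<in> borel_measurable borel" unfolding rho_eq by measurable
  have [measurable]: "T \<in> borel_measurable borel" unfolding T_def[abs_def] by measurable
  define f where "f x = rho \<phi> x *\<^sub>R x" for x :: "real^'n"
  have [measurable]: "f \<in> borel_measurable borel" unfolding f_def[abs_def] by measurable
  have "has_bochner_integral (distr lborel borel T) f 0"
  proof -
    have "distr lborel borel T = lborel" using L by (rule sym)
    then show ?thesis using I0 by (simp add: f_def[abs_def])
  qed
  then have "integrable (distr lborel borel T) f" "integral\<^sup>L (distr lborel borel T) f = 0"
    by (auto simp: has_bochner_integral_iff)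
  then have IT: "has_bochner_integral lborel (\<lambda>x. f (T x)) 0"
    by (simp add: has_bochner_integral_iff integrable_distr_eq integral_distr)
  have rT: "rho \<phi> (T x) = rho \<phi> x" for x
  proof -
    have "T x + c = - (x + c)" by (simp add: T_def vec_eq_iff algebra_simps)
    then have "(T x + c) \<bullet> (T x + c) = (x + c) \<bullet> (x + c)" by (simp only: inner_minus_left inner_minus_right minus_minus)
    then show ?thesis by (simp add: rho_def phi)
  qed
  have fT: "f (T x) = rho \<phi> x *\<^sub>R (-2 *\<^sub>R c) - rho \<phi> x *\<^sub>R x" for x
  proof -
    have "f (T x) = rho \<phi> x *\<^sub>R T x" by (simp add: f_def rT)
    also have "\<dots> = rho \<phi> x *\<^sub>R (-2 *\<^sub>R c) - rho \<phi> x *\<^sub>R x"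
      unfolding T_def by (simp add: vec_eq_iff algebra_simps)
    finally show ?thesis .
  qed
  have "has_bochner_integral lborel (\<lambda>x. rho \<phi> x *\<^sub>R (-2 *\<^sub>R c) - rho \<phi> x *\<^sub>R x) (1 *\<^sub>R (-2 *\<^sub>R c) - 0)"
    by (intro has_bochner_integral_diff has_bochner_integral_scaleR_left I1 I0)
  moreover have "has_bochner_integral lborel (\<lambda>x. rho \<phi> x *\<^sub>R (-2 *\<^sub>R c) - rho \<phi> x *\<^sub>R x) 0"
    using IT by (simp add: fT)
  ultimately have "1 *\<^sub>R (-2 *\<^sub>R c) - 0 = (0 :: real^'n)" by (rule has_bochner_integral_eq)
  then show ?thesis by simp
qed


lemma quad_case:
  fixes \<phi> :: "real^'n::finite \<Rightarrow> real" and g :: "real^'n \<Rightarrow> real^'n" and H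
  assumes hyps: "hyps \<phi> g H"
    and E: "\<And>x. 2 * \<phi> x + g x \<bullet> (x - p) = \<alpha> * ((x - p) \<bullet> (x - p)) + (x - p) \<bullet> \<beta> + \<gamma>"
  shows "g x = x"
proof -
  have D: "\<And>x. (\<phi> has_derivative (\<lambda>h. g x \<bullet> h)) (at x)"
    and DH: "\<And>x. (g has_derivative (\<lambda>h. H x *v h)) (at x)"
    and H3: "H3 \<phi>" and H7: "H7 \<phi> H"
    using hyps by (auto simp: hyps_def C2_with_def)
  define P where "P x = \<alpha> / 4 * ((x - p) \<bullet> (x - p)) + (x - p) \<bullet> \<beta> / 3 + \<gamma> / 2" for x
  define G where "G x = (\<alpha>/2) *\<^sub>R (x - p) + (1/3) *\<^sub>R \<beta>" for x
  have phiP: "\<phi> = P" using ray_lemma[OF D E] by (simp add: P_def fun_eq_iff)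
  have DP: "(P has_derivative (\<lambda>h. G y \<bullet> h)) (at y)" for y
    unfolding P_def[abs_def] G_def
    by (auto intro!: derivative_eq_intros simp: inner_add_left inner_commute algebra_simps)
  have gG: "g y = G y" for y
  proof -
    have "(\<lambda>h. g y \<bullet> h) = (\<lambda>h. G y \<bullet> h)"
      using has_derivative_unique[OF D[of y], unfolded phiP, OF DP] .
    then have "g y \<bullet> (g y - G y) = G y \<bullet> (g y - G y)" by metis
    then have "(g y - G y) \<bullet> (g y - G y) = 0" by (simp add: inner_diff_left)
    then show ?thesis by simp
  qed
  have gG': "G = g" by (rule ext) (simp add: gG)
  define K :: "real^'n^'n" where "K = (\<alpha>/2) *\<^sub>R mat 1"
  have DG: "(G has_derivative (\<lambda>h. (\<alpha>/2) *\<^sub>R h)) (at y)" for y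
    unfolding G_def[abs_def] by (auto intro!: derivative_eq_intros)
  have HK: "H y = K" for y
  proof -
    have "(\<lambda>h. H y *v h) = (\<lambda>h. (\<alpha>/2) *\<^sub>R h)"
      using has_derivative_unique[OF DH[of y] DG[of y, unfolded gG']] .
    moreover have "K *v h = (\<alpha>/2) *\<^sub>R h" for h
      unfolding K_def by (simp add: scaleR_matrix_vector_assoc[symmetric] matrix_vector_mul_lid)
    ultimately show ?thesis unfolding matrix_eq by (simp add: fun_eq_iff)
  qed
  have I1: "has_bochner_integral lborel (rho \<phi>) 1" using H3 by (auto simp: H3_def)
  have "has_bochner_integral lborel (\<lambda>x. rho \<phi> x *\<^sub>R K) (1 *\<^sub>R K)"
    by (intro has_bochner_integral_scaleR_left I1)
  moreover have "has_bochner_integral lborel (\<lambda>x. rho \<phi> x *\<^sub>R K) (mat 1)"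
    using H7 by (simp add: H7_def HK)
  ultimately have "1 *\<^sub>R K = mat 1" by (rule has_bochner_integral_eq)
  then have "K $ undefined $ undefined = (mat 1 :: real^'n^'n) $ undefined $ undefined" by simp
  then have a2: "\<alpha> = 2" by (simp add: K_def mat_def)
  define c where "c = (1/3) *\<^sub>R \<beta> - p"
  have "\<phi> y = (y + c) \<bullet> (y + c) / 2 + (\<gamma>/2 - (\<beta> \<bullet> \<beta>)/18)" for y
  proof -
    have "y + c = (y - p) + (1/3) *\<^sub>R \<beta>" by (simp add: c_def algebra_simps)
    then have e1: "(y + c) \<bullet> (y + c) = (y-p) \<bullet> (y-p) + (2/3) * ((y-p) \<bullet> \<beta>) + (\<beta> \<bullet> \<beta>)/9"
      by (simp only: inner_add_left inner_add_right inner_scaleR_left inner_scaleR_right inner_commute[of \<beta> "y - p"]) (simp add: field_simps)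
    show ?thesis unfolding phiP P_def a2 e1 by (simp add: field_simps)
  qed
  then have "c = 0" using gauss_center H3 by blast
  then show ?thesis using gG[of x] by (simp add: G_def a2 c_def algebra_simps)
qed


lemma alg:
  fixes a b s u1 u2 u3 u4 u5 :: real
  assumes "a \<noteq> 0" "s > 0" "a * (u1 / s - u2 / s - u3) + b * (u5 / (2 * s) - u4) = 0"
  shows "u1 - u2 - (s / a) * (a * u3 + b * u4) = - (b / (2 * a))  *  u5"
proof -
  have "(s / a)  *  (a * (u1 / s - u2 / s - u3) + b * (u5 / (2 * s) - u4)) = u1 - u2 - (s / a) * (a * u3 + b * u4) + (b / (2 * a))  *  u5"
    using assms(1,2) by (simp add: field_simps)
  then show ?thesis using assms(3) by simp
qed

lemma quad_shift:
  fixes x p w :: "real^'n::finite"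
  shows "x \<bullet> w - x \<bullet> p + \<alpha> * (x \<bullet> x) = \<alpha> * ((x - p) \<bullet> (x - p)) + (x - p) \<bullet> ((2 * \<alpha>) *\<^sub>R p + w - p) + (p \<bullet> (w - p) + \<alpha> * (p \<bullet> p))"
  by (simp add: inner_diff_left inner_diff_right inner_add_left inner_add_right inner_commute algebra_simps)

lemma core:
  fixes \<phi> :: "real^'n::finite \<Rightarrow> real" and g :: "real^'n \<Rightarrow> real^'n" and H
  assumes hyps: "hyps \<phi> g H" and nz: "\<exists>x. g x - x \<noteq> 0" and s: "s > 0"
    and id: "\<And>x. a * ((2 * (\<phi> x - c1) + g x \<bullet> x - d) / s - x \<bullet> w / s - (g x - x) \<bullet> m1)
                 + b * ((x \<bullet> x - c2) / (2 * s) - (g x - x) \<bullet> m2) = 0"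
  shows "a = 0 \<and> b = 0"
proof (cases "a = 0")
  case False
  define p where "p = (s / a) *\<^sub>R (a *\<^sub>R m1 + b *\<^sub>R m2)"
  define \<alpha> where "\<alpha> = - b / (2 * a)"
  have E: "2 * \<phi> x + g x \<bullet> (x - p) = \<alpha> * ((x - p) \<bullet> (x - p)) + (x - p) \<bullet> ((2 * \<alpha>) *\<^sub>R p + w - p)
      + (p \<bullet> (w - p) + \<alpha> * (p \<bullet> p) + 2 * c1 + d - \<alpha> * c2)" for x
  proof -
    have h1: "(g x - x) \<bullet> p = (s/a) * (a * ((g x - x) \<bullet> m1) + b * ((g x - x) \<bullet> m2))"
      by (simp add: p_def inner_add_right)
    have h2: "g x \<bullet> (x - p) = g x \<bullet> x - (g x - x) \<bullet> p - x \<bullet> p"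
      by (simp add: inner_diff_left inner_diff_right inner_commute)
    have h3: "2 * \<phi> x + g x \<bullet> x - (g x - x) \<bullet> p = 2 * c1 + d + x \<bullet> w + \<alpha> * (x \<bullet> x - c2)"
    proof -
      have "2 * (\<phi> x - c1) + g x \<bullet> x - d - x \<bullet> w - (s/a) * (a * ((g x - x) \<bullet> m1) + b * ((g x - x) \<bullet> m2))
          = - (b / (2 * a)) * (x \<bullet> x - c2)"
        using id[of x] False s by (intro alg) auto
      then show ?thesis unfolding h1 \<alpha>_def by (simp add: algebra_simps)
    qed
    show ?thesis using h2 h3 quad_shift[of x w p \<alpha>] inner_commute[of p x] by (simp add: algebra_simps)
  qed
  have "g x = x" for x by (rule quad_case[OF hyps E])
  then show ?thesis using nz by simp
next
  case True
  show ?thesis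
  proof (rule ccontr)
    assume "\<not> (a = 0 \<and> b = 0)"
    with True have b: "b \<noteq> 0" by simp
    have E: "g x \<bullet> m2 = x \<bullet> m2 + (x \<bullet> x - c2) / (2 * s)" for x
    proof -
      have "(x \<bullet> x - c2) / (2 * s) - (g x - x) \<bullet> m2 = 0" using id[of x] True b by simp
      then show ?thesis by (simp add: inner_diff_left)
    qed
    show False
    proof (cases "m2 = 0")
      case True
      have "(x \<bullet> x - c2) / (2 * s) = 0" for x :: "real^'n" using E[of x] True by simp
      then have "x \<bullet> x = c2" for x :: "real^'n" using s by simp
      from this[of 0] this[of "axis undefined 1"] show False by simp
    next
      case False
      have D: "\<And>x. (\<phi> has_derivative (\<lambda>h. g x \<bullet> h)) (at x)" and H3: "H3 \<phi>"
        using hyps by (auto simp: hyps_def C2_with_def)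
      have I: "integrable lborel (\<lambda>x. exp (- \<phi> x))"
      proof -
        have "has_bochner_integral lborel (\<lambda>x. exp (- \<phi> x)) 1"
          using H3 by (simp add: H3_def rho_def[abs_def])
        then show ?thesis by (rule integrable.intros)
      qed
      show False by (rule growth_contra[OF D E _ False I]) (use s in simp)
    qed
  qed
qed


lemma hat_inner:
  fixes v :: "real^('k::finite + 'm::finite)" and m :: "real^'k"
  shows "(\<chi> i. v $ Inl i) \<bullet> m = v \<bullet> (\<chi> j. case j of Inl i \<Rightarrow> m $ i | Inr _ \<Rightarrow> 0)"
proof -
  define e :: "real^('k + 'm)" where "e = (\<chi> j. case j of Inl i \<Rightarrow> m $ i | Inr _ \<Rightarrow> 0)"
  have U: "(UNIV :: ('k+'m) set) = range Inl \<union> range Inr" by (rule UNIV_sum)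
  have "v \<bullet> e = (\<Sum>j\<in>range Inl. v$j * e$j) + (\<Sum>j\<in>range Inr. v$j * e$j)"
    unfolding inner_vec_def U by (subst sum.union_disjoint) auto
  also have "(\<Sum>j\<in>range Inl. v$j * e$j) = (\<Sum>i\<in>UNIV. v$Inl i * m$i)"
    by (simp add: sum.reindex e_def)
  also have "(\<Sum>j\<in>range Inr. v$j * e$j) = 0"
    by (simp add: sum.reindex e_def)
  finally show ?thesis by (simp add: inner_vec_def e_def)
qed

theorem lemmaA3:
  shows "(\<forall>(\<phi> :: real^'n::finite \<Rightarrow> real) g H.
            hyps \<phi> g H \<and> d_phi g = CARD('n) \<longrightarrow>
            lin_indep2 (Psi_tilde \<phi> g (Psi1 \<phi> g H)) (Psi_tilde \<phi> g (Psi2 \<phi>)))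
       \<and> (\<forall>(\<phi> :: real^('k::finite + 'm::finite) \<Rightarrow> real) g H.
            hyps \<phi> g H \<and> E_phi g = span (range (\<lambda>i::'k. axis (Inl i) 1)) \<longrightarrow>
            lin_indep2 (Psi_hat \<phi> g (Psi1 \<phi> g H)) (Psi_hat \<phi> g (Psi2 \<phi>)))"
proof (intro conjI allI impI)
  fix \<phi> :: "real^'n::finite \<Rightarrow> real" and g H
  assume A: "hyps \<phi> g H \<and> d_phi g = CARD('n)"
  have nz: "\<exists>x. g x - x \<noteq> 0"
  proof (rule ccontr)
    assume "\<not> (\<exists>x. g x - x \<noteq> 0)"
    then have "range (Phi g) \<subseteq> {0}" by (auto simp: Phi_def)
    then have "d_phi g = 0" by (simp add: d_phi_def E_phi_def)
    then show False using A by simp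
  qed
  have s: "sqrt (2 * real CARD('n)) > 0" by simp
  show "lin_indep2 (Psi_tilde \<phi> g (Psi1 \<phi> g H)) (Psi_tilde \<phi> g (Psi2 \<phi>))"
    unfolding lin_indep2_def
  proof (intro allI impI)
    fix a b
    assume L: "\<forall>x. a * Psi_tilde \<phi> g (Psi1 \<phi> g H) x + b * Psi_tilde \<phi> g (Psi2 \<phi>) x = 0"
    define m1 where "m1 = matrix_inv (M_phi \<phi> g) *v alpha \<phi> g (Psi1 \<phi> g H)"
    define m2 where "m2 = matrix_inv (M_phi \<phi> g) *v alpha \<phi> g (Psi2 \<phi>)"
    have id: "a * ((2 * (\<phi> x - avg \<phi> \<phi>) + g x \<bullet> x - real CARD('n)) / sqrt (2 * real CARD('n))
                 - x \<bullet> avg \<phi> (\<lambda>y. H y *v y) / sqrt (2 * real CARD('n)) - (g x - x) \<bullet> m1)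
              + b * ((x \<bullet> x - avg \<phi> (\<lambda>y. (norm y)\<^sup>2)) / (2 * sqrt (2 * real CARD('n))) - (g x - x) \<bullet> m2) = 0" for x
      using L[rule_format, of x]
      by (simp only: Psi_tilde_def Psi1_def Psi2_def Phi_def m1_def m2_def power2_norm_eq_inner)
    show "a = 0 \<and> b = 0"
      by (rule core[OF conjunct1[OF A] nz s id])
  qed
next
  fix \<phi> :: "real^('k::finite + 'm::finite) \<Rightarrow> real" and g H
  assume A: "hyps \<phi> g H \<and> E_phi g = span (range (\<lambda>i::'k. axis (Inl i) 1))"
  have nz: "\<exists>x. g x - x \<noteq> 0"
  proof (rule ccontr)
    assume "\<not> (\<exists>x. g x - x \<noteq> 0)"
    then have "range (Phi g) \<subseteq> {0}" by (auto simp: Phi_def)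
    then have "E_phi g \<subseteq> {0}" unfolding E_phi_def
      by (metis span_mono span_zero span_empty span_insert_0 subset_singletonD empty_subsetI) 
    moreover have "axis (Inl (undefined::'k)) (1::real) \<in> E_phi g"
      using A by (auto intro: span_base)
    ultimately have "axis (Inl (undefined::'k)) (1::real) = (0 :: real^('k+'m))" by blast
    then have "axis (Inl (undefined::'k)) (1::real) $ Inl undefined = (0 :: real^('k+'m)) $ Inl undefined" by simp
    then show False by (simp add: axis_def)
  qed
  have "CARD('k + 'm) > 0" by (rule finite_UNIV_card_ge_0) simp
  moreover have "\<And>n::nat. n > 0 \<Longrightarrow> sqrt (2 * real n) > 0" by simp
  ultimately have s: "sqrt (2 * real CARD('k + 'm)) > 0" by blast
  show "lin_indep2 (Psi_hat \<phi> g (Psi1 \<phi> g H)) (Psi_hat \<phi> g (Psi2 \<phi>))"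
    unfolding lin_indep2_def
  proof (intro allI impI)
    fix a b
    assume L: "\<forall>x. a * Psi_hat \<phi> g (Psi1 \<phi> g H) x + b * Psi_hat \<phi> g (Psi2 \<phi>) x = 0"
    define m1 :: "real^('k+'m)" where "m1 = (\<chi> j. case j of Inl i \<Rightarrow> (matrix_inv (M_hat \<phi> g) *v alpha_hat \<phi> g (Psi1 \<phi> g H)) $ i | Inr _ \<Rightarrow> 0)"
    define m2 :: "real^('k+'m)" where "m2 = (\<chi> j. case j of Inl i \<Rightarrow> (matrix_inv (M_hat \<phi> g) *v alpha_hat \<phi> g (Psi2 \<phi>)) $ i | Inr _ \<Rightarrow> 0)"
    have id: "a * ((2 * (\<phi> x - avg \<phi> \<phi>) + g x \<bullet> x - real CARD('k + 'm)) / sqrt (2 * real CARD('k + 'm))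
                 - x \<bullet> avg \<phi> (\<lambda>y. H y *v y) / sqrt (2 * real CARD('k + 'm)) - (g x - x) \<bullet> m1)
              + b * ((x \<bullet> x - avg \<phi> (\<lambda>y. (norm y)\<^sup>2)) / (2 * sqrt (2 * real CARD('k + 'm))) - (g x - x) \<bullet> m2) = 0" for x
      using L[rule_format, of x]
      by (simp only: Psi_hat_def Psi1_def Psi2_def Phi_hat_def hat_inner Phi_def m1_def m2_def power2_norm_eq_inner)
    show "a = 0 \<and> b = 0"
      by (rule core[OF conjunct1[OF A] nz s id])
  qed
qed

end
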